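(* Let $X_1,\dots,X_n,T$ be independent random variables with common finite support $(l,r)$, where $X_1,\dots,X_n$ are i.i.d. with common CDF $F$ (distributed as $X$), and $T$ is uniformly distributed over $(l,r)$. Then $$R_{k,n}=\frac{1}{r-l}\sum_{j=k}^n\binom{n}{j}G_X(n-j,j),\qquad 0\le k\le n.$$
   Context: The reliability of the multi-component stress-strength system with strengths $X_1,\dots,X_n$ and stress $T$ (with CDF $F_T$), i.e. the probability that at least $k$ of the $X_i$ exceed $T$, is $R_{k,n}=\sum_{j=k}^n\binom{n}{j}\int_{-\infty}^{+\infty}[1-F(t)]^j[F(t)]^{n-j}\,dF_T(t)$, with $R_{0,n}=1$. The CIGF of $X$ is $G_X(\alpha,\beta)=\int_l^r [F(x)]^\alpha[1-F(x)]^\beta\,dx$ where $l=\inf\{x:F(x)>0\}$, $r=\sup\{x:F(x)<1\}$. *)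

theory Defs
  imports "HOL-Probability.Probability"
begin

definition supp_l :: "(real \<Rightarrow> real) \<Rightarrow> real" where
  "supp_l F = Inf {x. F x > 0}"

definition supp_r :: "(real \<Rightarrow> real) \<Rightarrow> real" where
  "supp_r F = Sup {x. F x < 1}"

definition CIGF :: "(real \<Rightarrow> real) \<Rightarrow> real \<Rightarrow> real \<Rightarrow> real" where
  "CIGF F \<alpha> \<beta> = (LBINT x:{supp_l F<..<supp_r F}. (F x) powr \<alpha> * (1 - F x) powr \<beta>)"

text \<open>Reliability of the k-out-of-n stress-strength system: strengths have CDF F,
  stress has distribution MT (so dF_T is integration against MT).\<close>
definition rel_kn :: "nat \<Rightarrow> nat \<Rightarrow> (real \<Rightarrow> real) \<Rightarrow> real measure \<Rightarrow> real" where
  "rel_kn k n F MT = (if k = 0 then 1 else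
     (\<Sum>j=k..n. real (n choose j) * (\<integral>t. (1 - F t) ^ j * (F t) ^ (n - j) \<partial>MT)))"

end

theory Submission
  imports Defs
begin

lemma unif_integral:
  fixes g :: "real \<Rightarrow> real" and l r :: real
  assumes "l < r" and [measurable]: "g \<in> borel_measurable borel"
  shows "integral\<^sup>L (uniform_measure lborel {l<..<r}) g = 1 / (r - l) * (LBINT x:{l<..<r}. g x)"
proof -
  have "uniform_measure lborel {l<..<r} = density lborel (\<lambda>x. ennreal (indicator {l<..<r} x / (r - l)))"
    unfolding uniform_measure_def
    using assms(1) by (intro density_cong) (auto simp: divide_ennreal ennreal_indicator[symmetric] indicator_def)
  then have "integral\<^sup>L (uniform_measure lborel {l<..<r}) g = (LINT x|lborel. (indicator {l<..<r} x / (r - l)) *\<^sub>R g x)"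
    using assms by (simp add: integral_density)
  also have "\<dots> = 1 / (r - l) * (LBINT x:{l<..<r}. g x)"
    by (simp add: set_lebesgue_integral_def integral_mult_right_zero[symmetric] mult_ac)
  finally show ?thesis .
qed

theorem proposition11:
  fixes M :: "real measure" and F :: "real \<Rightarrow> real" and l r :: real and k n :: nat
  assumes "real_distribution M"
    and "F = cdf M"
    and "bdd_below {x. F x > 0}" and "bdd_above {x. F x < 1}"
    and "l = supp_l F" and "r = supp_r F" and "l < r"
    and "k \<le> n"
  shows "rel_kn k n F (uniform_measure lborel {l<..<r})
         = 1 / (r - l) * (\<Sum>j=k..n. real (n choose j) * CIGF F (real (n - j)) (real j))"
proof -
  interpret real_distribution M by fact
  let ?U = "uniform_measure lborel {l<..<r}"
  have monoF: "mono F" using assms(2) by (auto simp: mono_def cdf_nondecreasing)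
  have Fm[measurable]: "F \<in> borel_measurable borel" using monoF by (rule borel_measurable_mono)
  have F01: "0 \<le> F x" "F x \<le> 1" for x using assms(2) cdf_nonneg cdf_bounded_prob by auto
  have ne1: "{x. F x > 0} \<noteq> {}"
  proof -
    have "eventually (\<lambda>x. F x > 1/2) at_top"
      using order_tendstoD(1)[OF cdf_lim_at_top_prob, of "1/2"] assms(2) by simp
    then obtain x where "F x > 1/2" using eventually_happens' by (metis eventually_at_top_linorder order.refl)
    then have "x \<in> {x. F x > 0}" by simp
    then show ?thesis by blast
  qed
  have ne2: "{x. F x < 1} \<noteq> {}"
  proof -
    have "eventually (\<lambda>x. F x < 1/2) at_bot"
      using order_tendstoD(2)[OF cdf_lim_at_bot, of "1/2"] assms(2) by simp
    then obtain x where "F x < 1/2" by (metis eventually_at_bot_linorder order.refl)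
    then have "x \<in> {x. F x < 1}" by simp
    then show ?thesis by blast
  qed
  have pos: "0 < F x" "F x < 1" if "x \<in> {l<..<r}" for x
  proof -
    have "Inf {x. F x > 0} < x" using that assms(5) by (simp add: supp_l_def)
    then obtain y where "y \<in> {x. F x > 0}" "y < x" using cInf_lessD[OF ne1] by blast
    then show "0 < F x" using monoF by (smt (verit, best) mem_Collect_eq monoD)
    have "x < Sup {x. F x < 1}" using that assms(6) by (simp add: supp_r_def)
    then obtain y where "y \<in> {x. F x < 1}" "x < y" using less_cSupD[OF ne2] by blast
    then show "F x < 1" using monoF by (smt (verit, best) mem_Collect_eq monoD)
  qed
  have cigf: "CIGF F (real (n - j)) (real j) = (r - l) * integral\<^sup>L ?U (\<lambda>t. (1 - F t) ^ j * F t ^ (n - j))" for j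
  proof -
    have "CIGF F (real (n - j)) (real j) = (LBINT x:{l<..<r}. (1 - F x) ^ j * F x ^ (n - j))"
      unfolding CIGF_def assms(5)[symmetric] assms(6)[symmetric]
      by (rule set_lebesgue_integral_cong) (auto simp: pos powr_realpow mult.commute)
    then show ?thesis using unif_integral[OF assms(7), of "\<lambda>t. (1 - F t) ^ j * F t ^ (n - j)"] assms(7)
      by simp
  qed
  have rhs: "1 / (r - l) * (\<Sum>j=k..n. real (n choose j) * CIGF F (real (n - j)) (real j))
     = (\<Sum>j=k..n. real (n choose j) * integral\<^sup>L ?U (\<lambda>t. (1 - F t) ^ j * F t ^ (n - j)))"
    unfolding sum_distrib_left
  proof (rule sum.cong)
    fix j assume "j \<in> {k..n}"
    show "1 / (r - l) * (real (n choose j) * CIGF F (real (n - j)) (real j)) =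
      real (n choose j) * integral\<^sup>L ?U (\<lambda>t. (1 - F t) ^ j * F t ^ (n - j))"
      unfolding cigf[of j] using assms(7) by simp
  qed simp
  show ?thesis
  proof (cases "k = 0")
    case False
    then show ?thesis using rhs by (simp add: rel_kn_def)
  next
    case True
    have ps: "prob_space ?U" using assms(7) by (intro prob_space_uniform_measure) auto
    have int: "integrable ?U (\<lambda>t. real (n choose j) * ((1 - F t) ^ j * F t ^ (n - j)))" for j
    proof -
      interpret U: prob_space ?U by (fact ps)
      show ?thesis
      proof (rule U.integrable_const_bound[where B = "real (n choose j)"])
        show "AE x in ?U. norm (real (n choose j) * ((1 - F x) ^ j * F x ^ (n - j))) \<le> real (n choose j)"
        proof (rule AE_I2)
          fix x
          have "(1 - F x) ^ j * F x ^ (n - j) \<le> 1"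
            using F01[of x] by (intro mult_le_one power_le_one) auto
          moreover have "0 \<le> (1 - F x) ^ j * F x ^ (n - j)" using F01[of x] by simp
          ultimately show "norm (real (n choose j) * ((1 - F x) ^ j * F x ^ (n - j))) \<le> real (n choose j)"
            by (simp add: abs_mult mult_left_le)
        qed
      qed simp
    qed
    have "(\<Sum>j=0..n. real (n choose j) * integral\<^sup>L ?U (\<lambda>t. (1 - F t) ^ j * F t ^ (n - j)))
        = integral\<^sup>L ?U (\<lambda>t. \<Sum>j=0..n. real (n choose j) * ((1 - F t) ^ j * F t ^ (n - j)))"
    proof -
      have "(\<Sum>j=0..n. real (n choose j) * integral\<^sup>L ?U (\<lambda>t. (1 - F t) ^ j * F t ^ (n - j)))
        = (\<Sum>j=0..n. integral\<^sup>L ?U (\<lambda>t. real (n choose j) * ((1 - F t) ^ j * F t ^ (n - j))))"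
        by (rule sum.cong) (simp_all only: integral_mult_right_zero)
      also have "\<dots> = integral\<^sup>L ?U (\<lambda>t. \<Sum>j=0..n. real (n choose j) * ((1 - F t) ^ j * F t ^ (n - j)))"
        by (rule Bochner_Integration.integral_sum[symmetric]) (rule int)
      finally show ?thesis .
    qed
    also have "\<dots> = integral\<^sup>L ?U (\<lambda>t. 1)"
    proof (rule Bochner_Integration.integral_cong)
      fix t
      have "(\<Sum>j=0..n. real (n choose j) * ((1 - F t) ^ j * F t ^ (n - j))) = ((1 - F t) + F t) ^ n"
        unfolding binomial_ring[of "1 - F t" "F t" n] atLeast0AtMost
        by (rule sum.cong) (simp_all add: mult_ac)
      then show "(\<Sum>j=0..n. real (n choose j) * ((1 - F t) ^ j * F t ^ (n - j))) = 1" by simp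
    qed simp
    also have "\<dots> = 1" using prob_space.prob_space[OF ps] by simp
    finally show ?thesis using rhs True by (simp add: rel_kn_def)
  qed
qed

end
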